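(* Let $k,s,b_1,b_2\in\mathbb{R}$ and $\eta>0$. If there is a constant $C$ such that $$\|uv\|_{X^{k,-1/2+\eta}_{per}}\le C\|u\|_{X^{k,b_1}_{per}}\|v\|_{H^{b_2}_tH^s_x}$$ for all (smooth, rapidly decaying in $t$) functions $u,v$ on $\mathbb{T}_x\times\mathbb{R}_t$, then $s\ge0$ and $k<s+1$.
   Context: $\widehat f(n,\tau)$ is the Fourier transform (Fourier coefficients in $x\in\mathbb{T}$, Fourier transform in $t$); $\langle x\rangle=1+|x|$. $\|f\|_{X^{s,b}_{per}}=\big(\sum_{n\in\mathbb{Z}}\int\langle n\rangle^{2s}\langle\tau+n^2\rangle^{2b}|\widehat f(n,\tau)|^2d\tau\big)^{1/2}$, $\|f\|_{H^b_tH^s_x}=\big(\sum_n\int\langle n\rangle^{2s}\langle\tau\rangle^{2b}|\widehat f(n,\tau)|^2d\tau\big)^{1/2}$. (The paper's exponent $-1/2+$ is interpreted as $-1/2+\eta$.) *)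

theory Defs
  imports "HOL-Analysis.Analysis"
begin

text \<open>Functions on \<open>T_x \<times> R_t\<close> with \<open>T = R / 2\<pi>Z\<close> are represented as
  \<open>f :: real \<times> real \<Rightarrow> complex\<close>, \<open>f (x, t)\<close>, 2\<pi>-periodic in \<open>x\<close>.\<close>

definition jbr :: "real \<Rightarrow> real" where
  "jbr x = 1 + \<bar>x\<bar>"

definition partial :: "nat \<Rightarrow> (real \<times> real \<Rightarrow> complex) \<Rightarrow> (real \<times> real \<Rightarrow> complex)" where
  "partial d g = (\<lambda>(x, t). if d = 0 then vector_derivative (\<lambda>y. g (y, t)) (at x)
                            else vector_derivative (\<lambda>s. g (x, s)) (at t))"

fun pd :: "nat list \<Rightarrow> (real \<times> real \<Rightarrow> complex) \<Rightarrow> (real \<times> real \<Rightarrow> complex)" where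
  "pd [] f = f"
| "pd (d # ds) f = partial d (pd ds f)"

definition smooth2 :: "(real \<times> real \<Rightarrow> complex) \<Rightarrow> bool" where
  "smooth2 f \<longleftrightarrow> (\<forall>ds. continuous_on UNIV (pd ds f) \<and>
      (\<forall>x t. (\<lambda>y. pd ds f (y, t)) differentiable (at x) \<and>
             (\<lambda>s. pd ds f (x, s)) differentiable (at t)))"

definition test_fun :: "(real \<times> real \<Rightarrow> complex) \<Rightarrow> bool" where
  "test_fun f \<longleftrightarrow> smooth2 f \<and> (\<forall>x t. f (x + 2 * pi, t) = f (x, t)) \<and>
     (\<forall>ds (N::nat). \<exists>C. \<forall>x t. (1 + \<bar>t\<bar>) ^ N * norm (pd ds f (x, t)) \<le> C)"

definition FT :: "(real \<times> real \<Rightarrow> complex) \<Rightarrow> int \<Rightarrow> real \<Rightarrow> complex" where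
  "FT f n \<tau> = (LINT x:{0..2*pi}|lborel. (LINT t|lborel. f (x, t) * cis (- (real_of_int n * x + \<tau> * t))))"

definition ennsqrt :: "ennreal \<Rightarrow> ennreal" where
  "ennsqrt q = (if q = \<infinity> then \<infinity> else ennreal (sqrt (enn2real q)))"

definition Xper_norm :: "real \<Rightarrow> real \<Rightarrow> (real \<times> real \<Rightarrow> complex) \<Rightarrow> ennreal" where
  "Xper_norm s b f = ennsqrt (\<integral>\<^sup>+ n. (\<integral>\<^sup>+ \<tau>. ennreal (jbr (real_of_int n) powr (2 * s)
        * jbr (\<tau> + (real_of_int n)\<^sup>2) powr (2 * b) * (cmod (FT f n \<tau>))\<^sup>2) \<partial>lborel) \<partial>count_space UNIV)"

definition HH_norm :: "real \<Rightarrow> real \<Rightarrow> (real \<times> real \<Rightarrow> complex) \<Rightarrow> ennreal" where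
  "HH_norm b s f = ennsqrt (\<integral>\<^sup>+ n. (\<integral>\<^sup>+ \<tau>. ennreal (jbr (real_of_int n) powr (2 * s)
        * jbr \<tau> powr (2 * b) * (cmod (FT f n \<tau>))\<^sup>2) \<partial>lborel) \<partial>count_space UNIV)"

end

theory Submission
  imports Defs "HOL-Probability.Probability" "HOL-Real_Asymp.Real_Asymp"
begin


definition EE :: "real \<Rightarrow> complex \<Rightarrow> complex" where
  "EE a z = exp (z * (\<i> * of_real a) - z^2/2)"

definition Phi :: "int \<Rightarrow> real \<Rightarrow> complex poly \<Rightarrow> real \<times> real \<Rightarrow> complex" where
  "Phi n a q = (\<lambda>(x,t). exp (\<i> * of_int n * of_real x) * (poly q (of_real t) * EE a (of_real t)))"

lemma hvd_x: "((\<lambda>y. exp (\<i> * of_int n * of_real y) * K) has_vector_derivative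
   (\<i> * of_int n * exp (\<i> * of_int n * of_real x) * K)) (at x)"
proof -
  have "((\<lambda>z. exp (\<i> * of_int n * z) * K) has_field_derivative
   (\<i> * of_int n * exp (\<i> * of_int n * of_real x) * K)) (at (of_real x))"
    by (auto intro!: derivative_eq_intros simp: algebra_simps)
  from has_vector_derivative_real_field[OF this] show ?thesis by simp
qed

lemma hvd_t: "((\<lambda>y. K * (poly q (of_real y) * EE a (of_real y))) has_vector_derivative
   (K * (poly (pderiv q + q * [:\<i> * of_real a, -1:]) (of_real t) * EE a (of_real t)))) (at t)"
proof -
  have "((\<lambda>z. K * (poly q z * EE a z)) has_field_derivative
   (K * (poly (pderiv q + q * [:\<i> * of_real a, -1:]) (of_real t) * EE a (of_real t)))) (at (of_real t))"
    unfolding EE_def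
    by (auto intro!: derivative_eq_intros poly_DERIV[THEN DERIV_chain2] simp: algebra_simps power2_eq_square)
  from has_vector_derivative_real_field[OF this] show ?thesis by simp
qed

lemma partial_Phi: "partial d (Phi n a q) = Phi n a (if d = 0 then smult (\<i> * of_int n) q
   else pderiv q + q * [:\<i> * of_real a, -1:])"
proof (rule ext, clarify)
  fix x t
  show "partial d (Phi n a q) (x, t) = Phi n a (if d = 0 then smult (\<i> * of_int n) q
   else pderiv q + q * [:\<i> * of_real a, -1:]) (x, t)"
  proof (cases "d = 0")
    case True
    then show ?thesis unfolding partial_def Phi_def
      by (simp only: prod.case if_True vector_derivative_at[OF hvd_x]) (simp add: algebra_simps)
  next
    case False
    then show ?thesis unfolding partial_def Phi_def
      by (simp only: prod.case if_False vector_derivative_at[OF hvd_t])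
  qed
qed

lemma pd_Phi: "\<exists>q'. pd ds (Phi n a q) = Phi n a q'"
proof (induction ds)
  case Nil then show ?case by auto
next
  case (Cons d ds)
  then obtain q' where "pd ds (Phi n a q) = Phi n a q'" by auto
  then show ?case by (auto simp: partial_Phi)
qed

lemma cont_Phi: "continuous_on UNIV (Phi n a q)"
  unfolding Phi_def EE_def split_beta
  by (intro continuous_intros) simp

lemma diff_Phi: "(\<lambda>y. Phi n a q (y, t)) differentiable (at x) \<and> (\<lambda>s. Phi n a q (x, s)) differentiable (at t)"
proof -
  have 1: "(\<lambda>y. Phi n a q (y, t)) = (\<lambda>y. exp (\<i> * of_int n * of_real y) * (poly q (of_real t) * EE a (of_real t)))"
    by (simp add: Phi_def)
  have 2: "(\<lambda>s. Phi n a q (x, s)) = (\<lambda>s. exp (\<i> * of_int n * of_real x) * (poly q (of_real s) * EE a (of_real s)))"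
    by (simp add: Phi_def)
  show ?thesis unfolding 1 2 
    using hvd_x[of n "poly q (of_real t) * EE a (of_real t)" x]
    hvd_t[of "exp (\<i> * of_int n * of_real x)" q a t]
    by (blast intro: differentiableI_vector)
qed

lemma smooth_Phi: "smooth2 (Phi n a q)"
  unfolding smooth2_def
proof (intro allI conjI)
  fix ds x t
  obtain q' where e: "pd ds (Phi n a q) = Phi n a q'" using pd_Phi by blast
  show "continuous_on UNIV (pd ds (Phi n a q))" unfolding e by (rule cont_Phi)
  show "(\<lambda>y. pd ds (Phi n a q) (y, t)) differentiable at x" unfolding e using diff_Phi by blast
  show "(\<lambda>s. pd ds (Phi n a q) (x, s)) differentiable at t" unfolding e using diff_Phi by blast
qed



lemma exp_2pi_int: "exp (\<i> * of_int n * of_real (2*pi)) = 1"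
proof -
  have "exp (\<i> * of_int n * of_real (2*pi)) = exp ((2 * of_int n * pi) * \<i>)" by (simp add: ac_simps)
  also have "\<dots> = 1" by (rule exp_integer_2pi) simp
  finally show ?thesis .
qed

lemma poly_growth: "\<exists>B d. \<forall>t::real. cmod (poly q (of_real t)) \<le> B * (1 + \<bar>t\<bar>) ^ d"
proof (induction q)
  case (pCons c p)
  then obtain B d where Bd: "\<And>t::real. cmod (poly p (of_real t)) \<le> B * (1 + \<bar>t\<bar>) ^ d" by blast
  have "cmod (poly (pCons c p) (of_real t)) \<le> (cmod c + \<bar>B\<bar>) * (1 + \<bar>t\<bar>) ^ Suc d" for t :: real
  proof -
    have "cmod (poly (pCons c p) (of_real t)) \<le> cmod c + \<bar>t\<bar> * cmod (poly p (of_real t))"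
      by (simp add: norm_triangle_le norm_mult)
    also have "\<dots> \<le> cmod c + \<bar>t\<bar> * (\<bar>B\<bar> * (1 + \<bar>t\<bar>) ^ d)"
      using Bd[of t] by (intro add_left_mono mult_left_mono) (auto intro: order_trans abs_ge_self)
    also have "\<dots> \<le> cmod c * (1 + \<bar>t\<bar>) ^ Suc d + (1 + \<bar>t\<bar>) * (\<bar>B\<bar> * (1 + \<bar>t\<bar>) ^ d)"
    proof (intro add_mono mult_right_mono)
      have "1 \<le> (1 + \<bar>t\<bar>) ^ Suc d" by (intro one_le_power) simp
      then show "cmod c \<le> cmod c * (1 + \<bar>t\<bar>) ^ Suc d" by (simp add: mult_le_cancel_left1)
    qed auto
    also have "\<dots> = (cmod c + \<bar>B\<bar>) * (1 + \<bar>t\<bar>) ^ Suc d" by (simp add: algebra_simps)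
    finally show ?thesis .
  qed
  then show ?case by blast
qed (rule exI[of _ 0], simp)

lemma pow_le_exp: assumes y: "(y::real) \<ge> 0" shows "y ^ M \<le> real M ^ M * exp y"
proof (cases "M = 0")
  case True then show ?thesis using y by simp
next
  case False
  have "y / M \<le> exp (y / M)" using exp_ge_add_one_self[of "y/M"] by linarith
  hence "(y / M) ^ M \<le> exp (y/M) ^ M" using y by (intro power_mono) auto
  also have "\<dots> = exp y" using False by (simp add: exp_of_nat_mult[symmetric])
  finally have "(y / M) ^ M \<le> exp y" .
  hence "real M ^ M * (y / M) ^ M \<le> real M ^ M * exp y" by (intro mult_left_mono) auto
  thus ?thesis using False by (simp add: power_divide)
qed

lemma gauss_poly_bound:
  fixes t :: real
  shows "(1 + \<bar>t\<bar>) ^ M * exp (- (t^2)/2) \<le> real M ^ M * exp (3/2)"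
proof -
  have "(1 + \<bar>t\<bar>) ^ M * exp (- (t^2)/2) \<le> real M ^ M * exp (1 + \<bar>t\<bar>) * exp (- (t^2)/2)"
    by (intro mult_right_mono pow_le_exp) auto
  also have "\<dots> = real M ^ M * exp (1 + \<bar>t\<bar> - (t^2)/2)" by (simp add: mult.assoc exp_add[symmetric])
  also have "\<dots> \<le> real M ^ M * exp (3/2)"
  proof -
    have "0 \<le> (\<bar>t\<bar> - 1)^2" by simp
    hence "1 + \<bar>t\<bar> - (t^2)/2 \<le> 3/2" by (simp add: power2_eq_square algebra_simps)
    thus ?thesis by (intro mult_left_mono) auto
  qed
  finally show ?thesis .
qed

lemma norm_Phi: "norm (Phi n a q (x, t)) = cmod (poly q (of_real t)) * exp (- (t^2)/2)"
  unfolding Phi_def EE_def by (simp add: norm_mult norm_exp_eq_Re power2_eq_square)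

lemma decay_Phi: "\<exists>C. \<forall>x t. (1 + \<bar>t\<bar>) ^ N * norm (Phi n a q (x, t)) \<le> C"
proof -
  obtain B d where Bd: "\<And>t::real. cmod (poly q (of_real t)) \<le> B * (1 + \<bar>t\<bar>) ^ d"
    using poly_growth by blast
  have "(1 + \<bar>t\<bar>) ^ N * norm (Phi n a q (x, t)) \<le> \<bar>B\<bar> * (real (N+d) ^ (N+d) * exp (3/2))" for x t
  proof -
    have "(1 + \<bar>t\<bar>) ^ N * norm (Phi n a q (x, t)) = (1 + \<bar>t\<bar>) ^ N * cmod (poly q (of_real t)) * exp (- (t^2)/2)"
      by (simp add: norm_Phi)
    also have "\<dots> \<le> (1 + \<bar>t\<bar>) ^ N * (\<bar>B\<bar> * (1 + \<bar>t\<bar>) ^ d) * exp (- (t^2)/2)"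
      using Bd[of t] by (intro mult_right_mono mult_left_mono) (auto intro: order_trans abs_ge_self)
    also have "\<dots> = \<bar>B\<bar> * ((1 + \<bar>t\<bar>) ^ (N + d) * exp (- (t^2)/2))" by (simp add: power_add)
    also have "\<dots> \<le> \<bar>B\<bar> * (real (N+d) ^ (N+d) * exp (3/2))"
      by (intro mult_left_mono gauss_poly_bound) auto
    finally show ?thesis .
  qed
  thus ?thesis by blast
qed

lemma test_fun_Phi: "test_fun (Phi n a q)"
  unfolding test_fun_def
proof (intro conjI allI)
  show "smooth2 (Phi n a q)" by (rule smooth_Phi)
  fix x t
  show "Phi n a q (x + 2 * pi, t) = Phi n a q (x, t)"
    unfolding Phi_def using exp_2pi_int[of n]
    by (simp add: distrib_left exp_add)
next
  fix ds N
  obtain q' where e: "pd ds (Phi n a q) = Phi n a q'" using pd_Phi by blast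
  show "\<exists>C. \<forall>x t. (1 + \<bar>t\<bar>) ^ N * norm (pd ds (Phi n a q) (x, t)) \<le> C"
    unfolding e by (rule decay_Phi)
qed



lemma circle_integral: "(LINT x:{0..2*pi}|lborel. exp (\<i> * of_int k * of_real x)) =
   (if k = 0 then of_real (2*pi) else 0)"
proof (cases "k = 0")
  case True
  have "(LINT x:{0..2*pi}|lborel. exp (\<i> * of_int k * of_real x)) = (CLBINT x=ereal 0..ereal (2*pi). 1)"
    using True interval_integral_Icc[of 0 "2*pi" "\<lambda>x. 1::complex", simplified] by simp
  also have "\<dots> = of_real (2*pi) - of_real 0"
    by (rule interval_integral_FTC_finite[where F = "\<lambda>x. of_real x"])
       (auto intro!: derivative_eq_intros continuous_intros)
  finally show ?thesis using True by simp
next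
  case False
  have "(LINT x:{0..2*pi}|lborel. exp (\<i> * of_int k * of_real x)) = (CLBINT x=ereal 0..ereal (2*pi). exp (\<i> * of_int k * of_real x))"
    using interval_integral_Icc[of 0 "2*pi" "\<lambda>x. exp (\<i> * of_int k * of_real x)"] by simp
  also have "\<dots> = exp (\<i> * of_int k * of_real (2*pi)) / (\<i> * of_int k) - exp (\<i> * of_int k * of_real 0) / (\<i> * of_int k)"
  proof (rule interval_integral_FTC_finite)
    show "continuous_on {min 0 (2 * pi)..max 0 (2 * pi)} (\<lambda>x. exp (\<i> * of_int k * of_real x))"
      by (intro continuous_intros)
    fix x :: real
    have "((\<lambda>z. exp (\<i> * of_int k * z) / (\<i> * of_int k)) has_field_derivative exp (\<i> * of_int k * of_real x)) (at (of_real x))"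
      using False by (auto intro!: derivative_eq_intros)
    from has_vector_derivative_real_field[OF this]
    show "((\<lambda>x. exp (\<i> * of_int k * of_real x) / (\<i> * of_int k)) has_vector_derivative exp (\<i> * of_int k * of_real x))
      (at x within {min 0 (2 * pi)..max 0 (2 * pi)})" .
  qed
  also have "\<dots> = 0" using exp_2pi_int[of k] by simp
  finally show ?thesis using False by simp
qed

lemma FT_sep: "FT (\<lambda>(x,t). exp (\<i> * of_int n * of_real x) * h t) m \<tau> =
   (if m = n then of_real (2*pi) else 0) * (LINT t|lborel. h t * cis (- (\<tau> * t)))"
proof -
  have inner: "(LINT t|lborel. exp (\<i> * of_int n * of_real x) * h t * cis (- (real_of_int m * x + \<tau> * t)))
     = exp (\<i> * of_int (n - m) * of_real x) * (LINT t|lborel. h t * cis (- (\<tau> * t)))" for x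
  proof -
    have "(\<lambda>t. exp (\<i> * of_int n * of_real x) * h t * cis (- (real_of_int m * x + \<tau> * t)))
        = (\<lambda>t. exp (\<i> * of_int (n - m) * of_real x) * (h t * cis (- (\<tau> * t))))"
    proof
      fix t
      have "cis (- (real_of_int m * x + \<tau> * t)) = exp (\<i> * of_real (- (real_of_int m * x))) * cis (- (\<tau> * t))"
      proof -
        have "cis (- (real_of_int m * x + \<tau> * t)) = cis (- (real_of_int m * x)) * cis (- (\<tau> * t))"
          by (simp add: cis_mult)
        also have "cis (- (real_of_int m * x)) = exp (\<i> * of_real (- (real_of_int m * x)))"
          by (rule cis_conv_exp)
        finally show ?thesis .
      qed
      moreover have "exp (\<i> * of_int n * of_real x) * exp (\<i> * of_real (- (real_of_int m * x))) =
          exp (\<i> * of_int (n - m) * of_real x)"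
        by (simp add: exp_add[symmetric] algebra_simps)
      ultimately show "exp (\<i> * of_int n * of_real x) * h t * cis (- (real_of_int m * x + \<tau> * t))
          = exp (\<i> * of_int (n - m) * of_real x) * (h t * cis (- (\<tau> * t)))"
        by (metis (no_types, lifting) mult.assoc mult.commute)
    qed
    then show ?thesis by simp
  qed
  have "FT (\<lambda>(x,t). exp (\<i> * of_int n * of_real x) * h t) m \<tau> =
     (LINT x:{0..2*pi}|lborel. exp (\<i> * of_int (n - m) * of_real x) * (LINT t|lborel. h t * cis (- (\<tau> * t))))"
    unfolding FT_def by (simp only: prod.case inner)
  also have "\<dots> = (if n - m = 0 then of_real (2*pi) else 0) * (LINT t|lborel. h t * cis (- (\<tau> * t)))"
    by (simp only: set_integral_mult_left circle_integral)
  finally show ?thesis by simp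
qed



lemma gauss_half: "(LINT t|lborel. complex_of_real (exp (- (t^2)/2)) * cis (\<theta> * t)) =
   complex_of_real (sqrt (2*pi) * exp (- (\<theta>^2)/2))"
proof -
  have "char std_normal_distribution \<theta> = complex_of_real (exp (- (\<theta>^2)/2))"
    by (simp add: char_std_normal_distribution)
  moreover have "char std_normal_distribution \<theta> = (LINT x|lborel. std_normal_density x *\<^sub>R iexp (\<theta> * x))"
    unfolding char_def by (rule integral_density) (auto simp: normal_density_nonneg)
  moreover have "(\<lambda>x. std_normal_density x *\<^sub>R iexp (\<theta> * x)) =
      (\<lambda>x. complex_of_real (1 / sqrt (2*pi)) * (complex_of_real (exp (- (x^2)/2)) * cis (\<theta> * x)))"
    by (auto simp: std_normal_density_def scaleR_conv_of_real cis_conv_exp mult_ac)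
  ultimately have "complex_of_real (exp (- (\<theta>^2)/2)) =
      complex_of_real (1 / sqrt (2*pi)) * (LINT t|lborel. complex_of_real (exp (- (t^2)/2)) * cis (\<theta> * t))"
    by simp
  hence "complex_of_real (sqrt (2*pi)) * complex_of_real (exp (- (\<theta>^2)/2)) =
      (LINT t|lborel. complex_of_real (exp (- (t^2)/2)) * cis (\<theta> * t))"
    by (simp add: field_simps)
  thus ?thesis by simp
qed

lemma gauss_one: "(LINT t|lborel. complex_of_real (exp (- (t^2))) * cis (\<theta> * t)) =
   complex_of_real (sqrt pi * exp (- (\<theta>^2)/4))"
proof -
  define c where "c = 1 / sqrt (2::real)"
  have c0: "c \<noteq> 0" "c > 0" by (auto simp: c_def)
  have cc: "c * c = 1/2" by (simp add: c_def)
  have "(LINT t|lborel. complex_of_real (exp (- (t^2))) * cis (\<theta> * t)) =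
     \<bar>c\<bar> *\<^sub>R (LINT x|lborel. complex_of_real (exp (- ((0 + c * x)^2))) * cis (\<theta> * (0 + c * x)))"
    by (rule lborel_integral_real_affine[OF c0(1)])
  also have "(\<lambda>x. complex_of_real (exp (- ((0 + c * x)^2))) * cis (\<theta> * (0 + c * x))) =
      (\<lambda>x. complex_of_real (exp (- (x^2)/2)) * cis ((\<theta> * c) * x))"
    by (auto simp: power2_eq_square mult_ac cc)
  also have "(LINT x|lborel. complex_of_real (exp (- (x^2)/2)) * cis ((\<theta> * c) * x)) =
     complex_of_real (sqrt (2*pi) * exp (- ((\<theta> * c)^2)/2))" by (rule gauss_half)
  also have "\<bar>c\<bar> *\<^sub>R complex_of_real (sqrt (2*pi) * exp (- ((\<theta> * c)^2)/2)) =
     complex_of_real (sqrt pi * exp (- (\<theta>^2)/4))"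
  proof -
    have "(\<theta> * c)^2 = \<theta>^2 / 2" by (simp add: power_mult_distrib power_divide c_def)
    moreover have "c * sqrt (2*pi) = sqrt pi" by (simp add: c_def real_sqrt_mult)
    ultimately have "\<bar>c\<bar> * (sqrt (2*pi) * exp (- ((\<theta> * c)^2)/2)) = sqrt pi * exp (- (\<theta>^2)/4)"
      using c0 by (simp add: mult.assoc[symmetric])
    thus ?thesis unfolding scaleR_conv_of_real of_real_mult[symmetric] by simp
  qed
  finally show ?thesis .
qed



definition Kint :: "real \<Rightarrow> real \<Rightarrow> ennreal" where
  "Kint p r = (\<integral>\<^sup>+\<tau>. ennreal (jbr \<tau> powr p * exp (- r * \<tau>^2)) \<partial>lborel)"

lemma jbr_ge1: "jbr x \<ge> 1" by (simp add: jbr_def)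
lemma jbr_pos: "jbr x > 0" by (simp add: jbr_def)

lemma jbr_meas[measurable]: "jbr \<in> borel_measurable borel"
  unfolding jbr_def by measurable

lemma Kint_shift: "(\<integral>\<^sup>+\<tau>. ennreal (jbr (\<tau> + c) powr p * exp (- r * (\<tau> + c)^2)) \<partial>lborel) = Kint p r"
proof -
  have "Kint p r = ennreal \<bar>1::real\<bar> * (\<integral>\<^sup>+x. ennreal (jbr (c + 1 * x) powr p * exp (- r * (c + 1 * x)^2)) \<partial>lborel)"
    unfolding Kint_def by (rule nn_integral_real_affine) auto
  thus ?thesis by (simp add: add.commute)
qed

lemma one_plus_pow: "(x::real) \<ge> 0 \<Longrightarrow> (1 + x) ^ m \<le> 2 ^ m * (1 + x ^ m)"
proof (cases "x \<le> 1")
  case True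
  assume x: "x \<ge> 0"
  have "(1 + x) ^ m \<le> 2 ^ m" using True x by (intro power_mono) auto
  also have "\<dots> \<le> 2 ^ m * (1 + x ^ m)" using x by simp
  finally show ?thesis .
next
  case False
  assume x: "x \<ge> 0"
  have "(1 + x) ^ m \<le> (2 * x) ^ m" using False by (intro power_mono) auto
  also have "\<dots> \<le> 2 ^ m * (1 + x ^ m)" by (simp add: power_mult_distrib)
  finally show ?thesis .
qed

lemma Kint_fin: assumes r: "r \<ge> 1/2" shows "Kint p r < \<infinity>"
proof -
  define m where "m = nat \<lceil>\<bar>p\<bar>\<rceil>"
  define g where "g = (\<lambda>\<tau>::real. 2 ^ m * sqrt (2*pi) * (std_normal_density \<tau> + std_normal_density \<tau> * \<bar>\<tau>\<bar> ^ m))"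
  have int: "integrable lborel g" unfolding g_def
    by (intro integrable_mult_right Bochner_Integration.integrable_add integrable_std_normal_moment_abs) auto
  have bound: "jbr \<tau> powr p * exp (- r * \<tau>^2) \<le> g \<tau>" for \<tau>
  proof -
    have "jbr \<tau> powr p \<le> jbr \<tau> powr (real m)"
    proof -
      have "real m = of_int \<lceil>\<bar>p\<bar>\<rceil>" unfolding m_def by simp
      moreover have "\<bar>p\<bar> \<le> of_int \<lceil>\<bar>p\<bar>\<rceil>" by (rule le_of_int_ceiling)
      ultimately have "p \<le> real m" by linarith
      thus ?thesis using jbr_ge1[of \<tau>] by (intro powr_mono) auto
    qed
    also have "\<dots> = jbr \<tau> ^ m" using jbr_pos[of \<tau>] by (simp add: powr_realpow)
    also have "\<dots> \<le> 2 ^ m * (1 + \<bar>\<tau>\<bar> ^ m)" unfolding jbr_def by (rule one_plus_pow) simp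
    finally have 1: "jbr \<tau> powr p \<le> 2 ^ m * (1 + \<bar>\<tau>\<bar> ^ m)" .
    have 2: "exp (- r * \<tau>^2) \<le> exp (- (\<tau>^2)/2)"
    proof -
      have "\<tau>^2 * (1/2) \<le> \<tau>^2 * r" using r by (intro mult_left_mono) auto
      thus ?thesis by (simp add: mult_ac)
    qed
    have "jbr \<tau> powr p * exp (- r * \<tau>^2) \<le> 2 ^ m * (1 + \<bar>\<tau>\<bar> ^ m) * exp (- (\<tau>^2)/2)"
      using 1 2 by (intro mult_mono) auto
    also have "\<dots> = g \<tau>" unfolding g_def std_normal_density_def by (simp add: field_simps)
    finally show ?thesis .
  qed
  have "Kint p r \<le> (\<integral>\<^sup>+\<tau>. ennreal (norm (g \<tau>)) \<partial>lborel)"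
    unfolding Kint_def using bound
    by (intro nn_integral_mono) (auto intro: order_trans abs_ge_self)
  also have "\<dots> < \<infinity>" using int by (simp add: integrable_iff_bounded)
  finally show ?thesis .
qed

lemma Kint_pos: "Kint p r > 0"
proof -
  have "Kint p r \<noteq> 0"
  proof
    assume "Kint p r = 0"
    hence "AE \<tau> in lborel. ennreal (jbr \<tau> powr p * exp (- r * \<tau>^2)) = 0"
      unfolding Kint_def by (subst (asm) nn_integral_0_iff_AE) auto
    moreover have "ennreal (jbr \<tau> powr p * exp (- r * \<tau>^2)) \<noteq> 0" for \<tau>
      using jbr_pos[of \<tau>] by simp
    ultimately have "AE \<tau>::real in lborel. False" by simp
    hence "UNIV \<in> null_sets (lborel :: real measure)" by (simp add: AE_iff_null)
    thus False by (simp add: null_sets_def)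
  qed
  thus ?thesis by (simp add: zero_less_iff_neq_zero)  
qed

lemma norm_sep:
  assumes "\<And>m \<tau>. FT f m \<tau> = (if m = n then complex_of_real (2*pi) else 0) * T \<tau>"
  shows "(\<integral>\<^sup>+ m. (\<integral>\<^sup>+ \<tau>. ennreal (W m \<tau> * (cmod (FT f m \<tau>))\<^sup>2) \<partial>lborel) \<partial>count_space UNIV)
     = (\<integral>\<^sup>+ \<tau>. ennreal (W n \<tau> * (4 * pi^2) * (cmod (T \<tau>))\<^sup>2) \<partial>lborel)"
proof -
  have "(\<lambda>m. (\<integral>\<^sup>+ \<tau>. ennreal (W m \<tau> * (cmod (FT f m \<tau>))\<^sup>2) \<partial>lborel)) =
     (\<lambda>m. (\<integral>\<^sup>+ \<tau>. ennreal (W n \<tau> * (4 * pi^2) * (cmod (T \<tau>))\<^sup>2) \<partial>lborel) * indicator {n} m)"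
    by (auto simp: assms norm_mult power_mult_distrib power2_eq_square mult_ac indicator_def)
  thus ?thesis by (simp add: nn_integral_cmult_indicator)
qed



lemma EE_real: "EE a (of_real t) = complex_of_real (exp (- (t^2)/2)) * cis (a * t)"
proof -
  have e: "of_real t * (\<i> * of_real a) - (of_real t)^2/2 = complex_of_real (- (t^2)/2) + \<i> * complex_of_real (a * t)"
    by (simp add: algebra_simps)
  show ?thesis unfolding EE_def e exp_add exp_of_real cis_conv_exp ..
qed

lemma Phi1_eq: "Phi n a 1 = (\<lambda>(x,t). exp (\<i> * of_int n * of_real x) * (complex_of_real (exp (- (t^2)/2)) * cis (a * t)))"
  unfolding Phi_def by (simp add: EE_real)

lemma Phi_prod_eq: "(\<lambda>p. Phi n1 a1 1 p * Phi n2 a2 1 p) =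
   (\<lambda>(x,t). exp (\<i> * of_int (n1 + n2) * of_real x) * (complex_of_real (exp (- (t^2))) * cis ((a1 + a2) * t)))"
proof (rule ext, clarify)
  fix x t :: real
  have 1: "exp (\<i> * of_int n1 * of_real x) * exp (\<i> * of_int n2 * of_real x) = exp (\<i> * of_int (n1 + n2) * of_real x)"
    by (simp add: exp_add[symmetric] algebra_simps)
  have 2: "exp (- (t^2)/2) * exp (- (t^2)/2) = exp (- (t^2))"
    by (simp add: exp_add[symmetric])
  have 3: "cis (a1 * t) * cis (a2 * t) = cis ((a1 + a2) * t)" by (simp add: cis_mult algebra_simps)
  show "Phi n1 a1 1 (x, t) * Phi n2 a2 1 (x, t) =
    exp (\<i> * of_int (n1 + n2) * of_real x) * (complex_of_real (exp (- (t^2))) * cis ((a1 + a2) * t))"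
    unfolding Phi1_eq prod.case 1[symmetric] 2[symmetric] 3[symmetric] of_real_mult
    by (simp add: mult_ac)
qed

lemma T_half: "(LINT t|lborel. complex_of_real (exp (- (t^2)/2)) * cis (a * t) * cis (- (\<tau> * t))) =
   complex_of_real (sqrt (2*pi) * exp (- ((a - \<tau>)^2)/2))"
proof -
  have "(\<lambda>t. complex_of_real (exp (- (t^2)/2)) * cis (a * t) * cis (- (\<tau> * t))) =
     (\<lambda>t. complex_of_real (exp (- (t^2)/2)) * cis ((a - \<tau>) * t))"
    by (auto simp: mult.assoc cis_mult algebra_simps)
  thus ?thesis using gauss_half[of "a - \<tau>"] by simp
qed

lemma T_one: "(LINT t|lborel. complex_of_real (exp (- (t^2))) * cis (a * t) * cis (- (\<tau> * t))) =
   complex_of_real (sqrt pi * exp (- ((a - \<tau>)^2)/4))"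
proof -
  have "(\<lambda>t. complex_of_real (exp (- (t^2))) * cis (a * t) * cis (- (\<tau> * t))) =
     (\<lambda>t. complex_of_real (exp (- (t^2))) * cis ((a - \<tau>) * t))"
    by (auto simp: mult.assoc cis_mult algebra_simps)
  thus ?thesis using gauss_one[of "a - \<tau>"] by simp
qed

lemma FT_Phi: "FT (Phi n a 1) m \<tau> = (if m = n then complex_of_real (2*pi) else 0) *
    complex_of_real (sqrt (2*pi) * exp (- ((a - \<tau>)^2)/2))"
  unfolding Phi1_eq FT_sep T_half ..

lemma FT_prod: "FT (\<lambda>p. Phi n1 a1 1 p * Phi n2 a2 1 p) m \<tau> = (if m = n1 + n2 then complex_of_real (2*pi) else 0) *
    complex_of_real (sqrt pi * exp (- ((a1 + a2 - \<tau>)^2)/4))"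
  unfolding Phi_prod_eq FT_sep T_one ..

lemma sq_half: "(cmod (complex_of_real (sqrt (2*pi) * exp (- ((a - \<tau>)^2)/2))))\<^sup>2 = 2 * pi * exp (- ((\<tau> - a)^2))"
proof -
  have "(sqrt (2*pi) * exp (- ((a - \<tau>)^2)/2))^2 = 2 * pi * (exp (- ((a - \<tau>)^2)/2))^2"
    by (simp add: power_mult_distrib)
  also have "(exp (- ((a - \<tau>)^2)/2))^2 = exp (- ((\<tau> - a)^2))"
    by (simp add: power2_eq_square exp_add[symmetric] algebra_simps)
  finally show ?thesis by (simp only: norm_of_real power2_abs)
qed

lemma sq_one: "(cmod (complex_of_real (sqrt pi * exp (- ((a - \<tau>)^2)/4))))\<^sup>2 = pi * exp (- (1/2) * (\<tau> - a)^2)"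
proof -
  have "(sqrt pi * exp (- ((a - \<tau>)^2)/4))^2 = pi * (exp (- ((a - \<tau>)^2)/4))^2"
    by (simp add: power_mult_distrib)
  also have "(exp (- ((a - \<tau>)^2)/4))^2 = exp (- (1/2) * (\<tau> - a)^2)"
    by (simp add: power2_eq_square exp_add[symmetric] algebra_simps)
  finally show ?thesis by (simp only: norm_of_real power2_abs)
qed



lemma nn_const:
  assumes "K \<ge> 0" "\<And>\<tau>. g \<tau> \<ge> 0" "g \<in> borel_measurable borel"
  shows "(\<integral>\<^sup>+\<tau>. ennreal (K * g \<tau>) \<partial>lborel) = ennreal K * (\<integral>\<^sup>+\<tau>. ennreal (g \<tau>) \<partial>lborel)"
proof -
  have "(\<integral>\<^sup>+\<tau>. ennreal (K * g \<tau>) \<partial>lborel) = (\<integral>\<^sup>+\<tau>. ennreal K * ennreal (g \<tau>) \<partial>lborel)"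
    using assms by (simp add: ennreal_mult)
  also have "\<dots> = ennreal K * (\<integral>\<^sup>+\<tau>. ennreal (g \<tau>) \<partial>lborel)"
    using assms(3) by (intro nn_integral_cmult) simp
  finally show ?thesis .
qed

lemma X_Phi: "Xper_norm s b (Phi n (- ((real_of_int n)^2)) 1) =
   ennsqrt (ennreal (jbr (real_of_int n) powr (2 * s) * (8 * pi^3)) * Kint (2 * b) 1)"
proof -
  let ?W = "\<lambda>m \<tau>. jbr (real_of_int m) powr (2 * s) * jbr (\<tau> + (real_of_int m)\<^sup>2) powr (2 * b)"
  have "(\<integral>\<^sup>+ m. (\<integral>\<^sup>+ \<tau>. ennreal (?W m \<tau> * (cmod (FT (Phi n (- ((real_of_int n)^2)) 1) m \<tau>))\<^sup>2) \<partial>lborel) \<partial>count_space UNIV)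
     = (\<integral>\<^sup>+ \<tau>. ennreal (?W n \<tau> * (4 * pi^2) * (cmod (complex_of_real (sqrt (2*pi) * exp (- ((- ((real_of_int n)^2) - \<tau>)^2)/2))))\<^sup>2) \<partial>lborel)"
    by (rule norm_sep) (rule FT_Phi)
  also have "\<dots> = (\<integral>\<^sup>+ \<tau>. ennreal ((jbr (real_of_int n) powr (2 * s) * (8 * pi^3)) *
       (jbr (\<tau> + (real_of_int n)\<^sup>2) powr (2 * b) * exp (- 1 * (\<tau> + (real_of_int n)\<^sup>2)^2))) \<partial>lborel)"
    unfolding sq_half by (simp add: power3_eq_cube power2_eq_square mult_ac)
  also have "\<dots> = ennreal (jbr (real_of_int n) powr (2 * s) * (8 * pi^3)) * Kint (2 * b) 1"
    by (subst nn_const) (auto simp: Kint_shift[of _ _ 1, simplified])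
  finally show ?thesis unfolding Xper_norm_def by simp
qed

lemma H_Phi: "HH_norm b s (Phi n 0 1) =
   ennsqrt (ennreal (jbr (real_of_int n) powr (2 * s) * (8 * pi^3)) * Kint (2 * b) 1)"
proof -
  let ?W = "\<lambda>m \<tau>. jbr (real_of_int m) powr (2 * s) * jbr \<tau> powr (2 * b)"
  have "(\<integral>\<^sup>+ m. (\<integral>\<^sup>+ \<tau>. ennreal (?W m \<tau> * (cmod (FT (Phi n 0 1) m \<tau>))\<^sup>2) \<partial>lborel) \<partial>count_space UNIV)
     = (\<integral>\<^sup>+ \<tau>. ennreal (?W n \<tau> * (4 * pi^2) * (cmod (complex_of_real (sqrt (2*pi) * exp (- ((0 - \<tau>)^2)/2))))\<^sup>2) \<partial>lborel)"
    by (rule norm_sep) (rule FT_Phi)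
  also have "\<dots> = (\<integral>\<^sup>+ \<tau>. ennreal ((jbr (real_of_int n) powr (2 * s) * (8 * pi^3)) *
       (jbr \<tau> powr (2 * b) * exp (- 1 * \<tau>^2))) \<partial>lborel)"
    unfolding sq_half by (simp add: power3_eq_cube power2_eq_square mult_ac)
  also have "\<dots> = ennreal (jbr (real_of_int n) powr (2 * s) * (8 * pi^3)) * Kint (2 * b) 1"
    by (subst nn_const) (auto simp: Kint_def)
  finally show ?thesis unfolding HH_norm_def by simp
qed

lemma X_prod_exact:
  assumes "a1 + a2 = - ((real_of_int (n1 + n2))^2)"
  shows "Xper_norm s b (\<lambda>p. Phi n1 a1 1 p * Phi n2 a2 1 p) =
   ennsqrt (ennreal (jbr (real_of_int (n1 + n2)) powr (2 * s) * (4 * pi^3)) * Kint (2 * b) (1/2))"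
proof -
  let ?W = "\<lambda>m \<tau>. jbr (real_of_int m) powr (2 * s) * jbr (\<tau> + (real_of_int m)\<^sup>2) powr (2 * b)"
  let ?n = "n1 + n2"
  have "(\<integral>\<^sup>+ m. (\<integral>\<^sup>+ \<tau>. ennreal (?W m \<tau> * (cmod (FT (\<lambda>p. Phi n1 a1 1 p * Phi n2 a2 1 p) m \<tau>))\<^sup>2) \<partial>lborel) \<partial>count_space UNIV)
     = (\<integral>\<^sup>+ \<tau>. ennreal (?W ?n \<tau> * (4 * pi^2) * (cmod (complex_of_real (sqrt pi * exp (- ((a1 + a2 - \<tau>)^2)/4))))\<^sup>2) \<partial>lborel)"
    by (rule norm_sep) (rule FT_prod)
  also have "\<dots> = (\<integral>\<^sup>+ \<tau>. ennreal ((jbr (real_of_int ?n) powr (2 * s) * (4 * pi^3)) *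
       (jbr (\<tau> + (real_of_int ?n)\<^sup>2) powr (2 * b) * exp (- (1/2) * (\<tau> + (real_of_int ?n)\<^sup>2)^2))) \<partial>lborel)"
    unfolding sq_one assms by (simp add: power3_eq_cube power2_eq_square mult_ac)
  also have "\<dots> = ennreal (jbr (real_of_int ?n) powr (2 * s) * (4 * pi^3)) * Kint (2 * b) (1/2)"
    by (subst nn_const) (auto simp: Kint_shift[of _ _ "1/2", simplified])
  finally show ?thesis unfolding Xper_norm_def by simp
qed



lemma ennsqrt_sq: "ennsqrt q ^ 2 = q"
proof (cases "q = \<infinity>")
  case True then show ?thesis by (simp add: ennsqrt_def)
next
  case False
  have "ennsqrt q ^ 2 = ennreal ((sqrt (enn2real q))^2)"
    using False by (simp add: ennsqrt_def ennreal_power)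
  also have "\<dots> = q" using False by (simp add: less_top)
  finally show ?thesis .
qed

lemma jbr_add: "jbr (x + y) \<le> jbr x * jbr y"
proof -
  have "\<bar>x + y\<bar> \<le> \<bar>x\<bar> + \<bar>y\<bar>" by (rule abs_triangle_ineq)
  moreover have "0 \<le> \<bar>x\<bar> * \<bar>y\<bar>" by simp
  moreover have "(1 + \<bar>x\<bar>) * (1 + \<bar>y\<bar>) = 1 + \<bar>x\<bar> + \<bar>y\<bar> + \<bar>x\<bar> * \<bar>y\<bar>"
    by (simp add: algebra_simps)
  ultimately show ?thesis unfolding jbr_def by linarith
qed

lemma peetre: "jbr (\<tau> + c) powr q \<ge> jbr c powr q * jbr \<tau> powr (- \<bar>q\<bar>)"
proof (cases "q \<ge> 0")
  case True
  have "jbr c \<le> jbr (\<tau> + c) * jbr (- \<tau>)" using jbr_add[of "\<tau> + c" "- \<tau>"] by simp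
  hence "jbr c / jbr \<tau> \<le> jbr (\<tau> + c)" using jbr_pos[of \<tau>]
    by (simp add: jbr_def divide_le_eq)
  hence "(jbr c / jbr \<tau>) powr q \<le> jbr (\<tau> + c) powr q"
    using True jbr_pos[of c] jbr_pos[of \<tau>] by (intro powr_mono2) auto
  thus ?thesis using True jbr_pos[of c] jbr_pos[of \<tau>]
    by (simp add: powr_divide powr_minus_divide)
next
  case False
  have "jbr (\<tau> + c) \<le> jbr \<tau> * jbr c" by (rule jbr_add)
  hence "(jbr \<tau> * jbr c) powr q \<le> jbr (\<tau> + c) powr q"
    using False jbr_pos[of "\<tau> + c"] by (intro powr_mono2') auto
  thus ?thesis using False jbr_pos[of c] jbr_pos[of \<tau>]
    by (simp add: powr_mult mult.commute)
qed

lemma X_prod_lower: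
  "(Xper_norm s b (\<lambda>p. Phi n1 0 1 p * Phi n2 0 1 p))^2 \<ge>
   ennreal (jbr (real_of_int (n1 + n2)) powr (2 * s) * (4 * pi^3) * jbr ((real_of_int (n1 + n2))^2) powr (2 * b))
     * Kint (- \<bar>2 * b\<bar>) (1/2)"
proof -
  let ?W = "\<lambda>m \<tau>. jbr (real_of_int m) powr (2 * s) * jbr (\<tau> + (real_of_int m)\<^sup>2) powr (2 * b)"
  let ?n = "n1 + n2"
  let ?K = "jbr (real_of_int ?n) powr (2 * s) * (4 * pi^3) * jbr ((real_of_int ?n)^2) powr (2 * b)"
  have "(Xper_norm s b (\<lambda>p. Phi n1 0 1 p * Phi n2 0 1 p))^2 =
     (\<integral>\<^sup>+ m. (\<integral>\<^sup>+ \<tau>. ennreal (?W m \<tau> * (cmod (FT (\<lambda>p. Phi n1 0 1 p * Phi n2 0 1 p) m \<tau>))\<^sup>2) \<partial>lborel) \<partial>count_space UNIV)"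
    unfolding Xper_norm_def ennsqrt_sq ..
  also have "\<dots> = (\<integral>\<^sup>+ \<tau>. ennreal (?W ?n \<tau> * (4 * pi^2) * (cmod (complex_of_real (sqrt pi * exp (- ((0 + 0 - \<tau>)^2)/4))))\<^sup>2) \<partial>lborel)"
    by (rule norm_sep) (rule FT_prod)
  also have "\<dots> = (\<integral>\<^sup>+ \<tau>. ennreal ((jbr (real_of_int ?n) powr (2 * s) * (4 * pi^3)) *
       (jbr (\<tau> + (real_of_int ?n)\<^sup>2) powr (2 * b) * exp (- (1/2) * \<tau>^2))) \<partial>lborel)"
    unfolding sq_one by (simp add: power3_eq_cube power2_eq_square mult_ac)
  also have "\<dots> \<ge> (\<integral>\<^sup>+ \<tau>. ennreal (?K * (jbr \<tau> powr (- \<bar>2 * b\<bar>) * exp (- (1/2) * \<tau>^2))) \<partial>lborel)"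
  proof (intro nn_integral_mono ennreal_leI)
    fix \<tau>
    have "jbr ((real_of_int ?n)^2) powr (2 * b) * jbr \<tau> powr (- \<bar>2 * b\<bar>) \<le> jbr (\<tau> + (real_of_int ?n)\<^sup>2) powr (2 * b)"
      by (rule peetre)
    hence "jbr ((real_of_int ?n)^2) powr (2 * b) * jbr \<tau> powr (- \<bar>2 * b\<bar>) * exp (- (1/2) * \<tau>^2)
        \<le> jbr (\<tau> + (real_of_int ?n)\<^sup>2) powr (2 * b) * exp (- (1/2) * \<tau>^2)"
      by (intro mult_right_mono) auto
    hence "(jbr (real_of_int ?n) powr (2 * s) * (4 * pi^3)) * (jbr ((real_of_int ?n)^2) powr (2 * b) * jbr \<tau> powr (- \<bar>2 * b\<bar>) * exp (- (1/2) * \<tau>^2))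
        \<le> (jbr (real_of_int ?n) powr (2 * s) * (4 * pi^3)) * (jbr (\<tau> + (real_of_int ?n)\<^sup>2) powr (2 * b) * exp (- (1/2) * \<tau>^2))"
      by (intro mult_left_mono) auto
    thus "?K * (jbr \<tau> powr (- \<bar>2 * b\<bar>) * exp (- (1/2) * \<tau>^2)) \<le>
        (jbr (real_of_int ?n) powr (2 * s) * (4 * pi^3)) * (jbr (\<tau> + (real_of_int ?n)\<^sup>2) powr (2 * b) * exp (- (1/2) * \<tau>^2))"
      by (simp add: mult_ac)
  qed
  also have "(\<integral>\<^sup>+ \<tau>. ennreal (?K * (jbr \<tau> powr (- \<bar>2 * b\<bar>) * exp (- (1/2) * \<tau>^2))) \<partial>lborel) =
      ennreal ?K * Kint (- \<bar>2 * b\<bar>) (1/2)"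
    unfolding Kint_def by (rule nn_const) auto
  finally show ?thesis .
qed



lemma L1: "s < 0 \<Longrightarrow> ((\<lambda>N::nat. (1 + 2 * real N) powr (2 * s)) \<longlongrightarrow> 0) sequentially"
  by real_asymp

lemma L2: "\<eta> > 0 \<Longrightarrow> filterlim (\<lambda>N::nat. (1 + real N) powr (4 * \<eta>)) at_top sequentially"
  by real_asymp



lemma core:
  assumes "X \<le> ennreal C * ennsqrt A * ennsqrt B"
  shows "X^2 \<le> ennreal ((max C 0)^2) * A * B"
proof -
  have "X^2 \<le> (ennreal C * ennsqrt A * ennsqrt B)^2" using assms by (intro power_mono) auto
  also have "\<dots> = (ennreal C)^2 * A * B" by (simp add: power_mult_distrib ennsqrt_sq)
  also have "(ennreal C)^2 = ennreal ((max C 0)^2)"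
    by (metis ennreal_power max.cobounded2 max.commute ennreal_max_0)
  finally show ?thesis .
qed

lemma Kint_real: "r \<ge> 1/2 \<Longrightarrow> \<exists>\<kappa>>0. Kint p r = ennreal \<kappa>"
proof -
  assume r: "r \<ge> 1/2"
  have f: "Kint p r < \<infinity>" using Kint_fin[OF r] .
  have p: "Kint p r > 0" by (rule Kint_pos)
  show ?thesis
    using f p by (intro exI[of _ "enn2real (Kint p r)"]) (auto simp: enn2real_positive_iff less_top)
qed

lemma jbr_uminus: "jbr (- x) = jbr x" by (simp add: jbr_def)

lemma ex2:
  assumes H: "\<forall>u v. test_fun u \<longrightarrow> test_fun v \<longrightarrow>
           Xper_norm k (-1/2 + \<eta>) (\<lambda>p. u p * v p)
             \<le> ennreal C * Xper_norm k b1 u * HH_norm b2 s v"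
  shows "s \<ge> 0"
proof (rule ccontr)
  assume "\<not> s \<ge> 0" hence s: "s < 0" by simp
  obtain \<kappa>1 where k1: "\<kappa>1 > 0" "Kint (2 * b1) 1 = ennreal \<kappa>1" using Kint_real[of 1] by auto
  obtain \<kappa>2 where k2: "\<kappa>2 > 0" "Kint (2 * b2) 1 = ennreal \<kappa>2" using Kint_real[of 1] by auto
  obtain \<kappa>3 where k3: "\<kappa>3 > 0" "Kint (2 * (-1/2 + \<eta>)) (1/2) = ennreal \<kappa>3" using Kint_real[of "1/2"] by auto
  define C' where "C' = max C 0"
  define M where "M = 16 * pi^3 * C'^2 * \<kappa>1 * \<kappa>2"
  have M0: "M \<ge> 0" using k1 k2 by (simp add: M_def)
  have "eventually (\<lambda>N. (1 + 2 * real N) powr (2 * s) < \<kappa>3 / (M + 1)) sequentially"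
    using L1[OF s] k3 M0 by (intro order_tendstoD) auto
  then obtain N :: nat where N: "(1 + 2 * real N) powr (2 * s) < \<kappa>3 / (M + 1)"
    by (auto simp: eventually_sequentially)
  define n :: int where "n = int N"
  let ?u = "Phi n (- ((real_of_int n)^2)) 1"
  let ?v = "Phi (-2 * n) 0 1"
  have "Xper_norm k (-1/2 + \<eta>) (\<lambda>p. ?u p * ?v p) \<le> ennreal C * Xper_norm k b1 ?u * HH_norm b2 s ?v"
    using H test_fun_Phi by blast
  hence "Xper_norm k (-1/2 + \<eta>) (\<lambda>p. ?u p * ?v p) \<le> ennreal C *
     ennsqrt (ennreal (jbr (real_of_int n) powr (2 * k) * (8 * pi^3)) * Kint (2 * b1) 1) *
     ennsqrt (ennreal (jbr (real_of_int (-2 * n)) powr (2 * s) * (8 * pi^3)) * Kint (2 * b2) 1)"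
    by (simp only: X_Phi H_Phi)
  from core[OF this] have
    "(Xper_norm k (-1/2 + \<eta>) (\<lambda>p. ?u p * ?v p))^2 \<le> ennreal (C'^2) *
     (ennreal (jbr (real_of_int n) powr (2 * k) * (8 * pi^3)) * ennreal \<kappa>1) *
     (ennreal (jbr (real_of_int (-2 * n)) powr (2 * s) * (8 * pi^3)) * ennreal \<kappa>2)"
    unfolding C'_def k1 k2 .
  moreover have "Xper_norm k (-1/2 + \<eta>) (\<lambda>p. ?u p * ?v p) =
     ennsqrt (ennreal (jbr (real_of_int (n + -2 * n)) powr (2 * k) * (4 * pi^3)) * Kint (2 * (-1/2 + \<eta>)) (1/2))"
    by (rule X_prod_exact) simp
  ultimately have "ennreal (jbr (real_of_int (n + -2 * n)) powr (2 * k) * (4 * pi^3)) * ennreal \<kappa>3 \<le>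
     ennreal (C'^2) *
     (ennreal (jbr (real_of_int n) powr (2 * k) * (8 * pi^3)) * ennreal \<kappa>1) *
     (ennreal (jbr (real_of_int (-2 * n)) powr (2 * s) * (8 * pi^3)) * ennreal \<kappa>2)"
    by (simp only: ennsqrt_sq k3(2))
  hence "ennreal (jbr (real_of_int (n + -2 * n)) powr (2 * k) * (4 * pi^3) * \<kappa>3) \<le>
     ennreal (C'^2 *
     (jbr (real_of_int n) powr (2 * k) * (8 * pi^3) * \<kappa>1) *
     (jbr (real_of_int (-2 * n)) powr (2 * s) * (8 * pi^3) * \<kappa>2))"
    using k1 k2 k3 by (simp add: ennreal_mult[symmetric] del: ennreal_mult')
  hence ineq: "jbr (real_of_int (n + -2 * n)) powr (2 * k) * (4 * pi^3) * \<kappa>3 \<le>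
     C'^2 * (jbr (real_of_int n) powr (2 * k) * (8 * pi^3) * \<kappa>1) *
     (jbr (real_of_int (-2 * n)) powr (2 * s) * (8 * pi^3) * \<kappa>2)"
    using k1 k2 by (subst (asm) ennreal_le_iff) auto
  define J where "J = jbr (real_of_int n) powr (2 * k) * (4 * pi^3)"
  define x where "x = (1 + 2 * real N) powr (2 * s)"
  have J0: "J > 0" unfolding J_def using jbr_pos[of "real_of_int n"] by simp
  have e1: "jbr (real_of_int (n + -2 * n)) = jbr (real_of_int n)"
    using jbr_uminus[of "real_of_int n"] by simp
  have e2: "jbr (real_of_int (-2 * n)) powr (2 * s) = x"
    unfolding x_def n_def jbr_def by simp
  have "J * \<kappa>3 \<le> J * (M * x)"
    using ineq unfolding e1 e2 J_def M_def by (simp add: power3_eq_cube mult_ac)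
  hence "\<kappa>3 \<le> M * x" using J0 by simp
  also have "M * x \<le> M * (\<kappa>3 / (M + 1))" using N M0 unfolding x_def by (intro mult_left_mono) auto
  also have "\<dots> < \<kappa>3" using M0 k3 by (simp add: field_simps)
  finally show False by simp
qed



lemma jbr_sq_bound:
  assumes x: "x \<ge> 0"
  shows "jbr (x^2) powr q \<ge> 2 powr (- \<bar>q\<bar>) * jbr x powr (2 * q)"
proof -
  have j1: "jbr x = 1 + x" "jbr (x^2) = 1 + x^2" using x by (auto simp: jbr_def)
  have a: "(1 + x)^2 / 2 \<le> 1 + x^2"
  proof -
    have "0 \<le> (x - 1)^2" by simp
    thus ?thesis by (simp add: power2_eq_square algebra_simps)
  qed
  have b: "1 + x^2 \<le> (1 + x)^2" using x by (simp add: power2_eq_square algebra_simps)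
  have e: "(1 + x)^2 = (1 + x) powr 2" using x by (subst powr_numeral) auto
  have pw: "((1 + x)^2) powr q = (1 + x) powr (2 * q)"
    unfolding e powr_powr by simp
  show ?thesis
  proof (cases "q \<ge> 0")
    case True
    have "((1 + x)^2 / 2) powr q \<le> (1 + x^2) powr q" using a True x by (intro powr_mono2) auto
    moreover have "((1 + x)^2 / 2) powr q = 2 powr (- \<bar>q\<bar>) * (1 + x) powr (2 * q)"
      using True x by (simp add: powr_divide pw powr_minus_divide)
    ultimately show ?thesis unfolding j1 by simp
  next
    case False
    have "((1 + x)^2) powr q \<le> (1 + x^2) powr q" using b False x by (intro powr_mono2') (auto intro: add_pos_nonneg)
    moreover have "2 powr (- \<bar>q\<bar>) \<le> 1" using powr_mono[of "- \<bar>q\<bar>" 0 "2::real"] by simp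
    moreover have "0 \<le> (1 + x) powr (2 * q)" by simp
    ultimately have "2 powr (- \<bar>q\<bar>) * (1 + x) powr (2 * q) \<le> (1 + x^2) powr q"
      unfolding pw by (meson mult_left_le_one_le order_trans powr_ge_zero)
    thus ?thesis unfolding j1 .
  qed
qed

lemma ex1:
  assumes eta: "\<eta> > 0"
  assumes H: "\<forall>u v. test_fun u \<longrightarrow> test_fun v \<longrightarrow>
           Xper_norm k (-1/2 + \<eta>) (\<lambda>p. u p * v p)
             \<le> ennreal C * Xper_norm k b1 u * HH_norm b2 s v"
  shows "k < s + 1"
proof (rule ccontr)
  assume "\<not> k < s + 1" hence ks: "k \<ge> s + 1" by simp
  define q where "q = 2 * (-1/2 + \<eta>)"
  obtain \<kappa>1 where k1: "\<kappa>1 > 0" "Kint (2 * b1) 1 = ennreal \<kappa>1" using Kint_real[of 1] by auto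
  obtain \<kappa>2 where k2: "\<kappa>2 > 0" "Kint (2 * b2) 1 = ennreal \<kappa>2" using Kint_real[of 1] by auto
  obtain \<kappa>4 where k4: "\<kappa>4 > 0" "Kint (- \<bar>q\<bar>) (1/2) = ennreal \<kappa>4" using Kint_real[of "1/2"] by auto
  define C' where "C' = max C 0"
  define c where "c = 4 * pi^3 * \<kappa>4 * 2 powr (- \<bar>q\<bar>)"
  define D where "D = C'^2 * (8 * pi^3 * \<kappa>1) * (8 * pi^3 * \<kappa>2)"
  have c0: "c > 0" using k4 by (simp add: c_def)
  have D0: "D \<ge> 0" using k1 k2 by (simp add: D_def)
  have "eventually (\<lambda>N. (1 + real N) powr (4 * \<eta>) > D / c) sequentially"
    using L2[OF eta] by (simp add: filterlim_at_top_dense)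
  then obtain N :: nat where N: "(1 + real N) powr (4 * \<eta>) > D / c"
    by (auto simp: eventually_sequentially)
  define n :: int where "n = int N"
  let ?u = "Phi 0 0 1"
  let ?v = "Phi n 0 1"
  have "Xper_norm k (-1/2 + \<eta>) (\<lambda>p. ?u p * ?v p) \<le> ennreal C * Xper_norm k b1 ?u * HH_norm b2 s ?v"
    using H test_fun_Phi by blast
  moreover have "Xper_norm k b1 ?u = ennsqrt (ennreal (8 * pi^3) * Kint (2 * b1) 1)"
    using X_Phi[where s=k and b=b1 and n=0] by (simp add: jbr_def)
  ultimately have "Xper_norm k (-1/2 + \<eta>) (\<lambda>p. ?u p * ?v p) \<le> ennreal C *
     ennsqrt (ennreal (8 * pi^3) * Kint (2 * b1) 1) *
     ennsqrt (ennreal (jbr (real_of_int n) powr (2 * s) * (8 * pi^3)) * Kint (2 * b2) 1)"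
    by (simp only: H_Phi)
  from core[OF this] have up:
    "(Xper_norm k (-1/2 + \<eta>) (\<lambda>p. ?u p * ?v p))^2 \<le> ennreal (C'^2) *
     (ennreal (8 * pi^3) * ennreal \<kappa>1) *
     (ennreal (jbr (real_of_int n) powr (2 * s) * (8 * pi^3)) * ennreal \<kappa>2)"
    unfolding C'_def k1 k2 .
  have low: "(Xper_norm k (-1/2 + \<eta>) (\<lambda>p. ?u p * ?v p))^2 \<ge>
     ennreal (jbr (real_of_int n) powr (2 * k) * (4 * pi^3) * jbr ((real_of_int n)^2) powr q) * ennreal \<kappa>4"
  proof -
    have "(Xper_norm k (-1/2 + \<eta>) (\<lambda>p. Phi 0 0 1 p * Phi n 0 1 p))^2 \<ge>
      ennreal (jbr (real_of_int (0 + n)) powr (2 * k) * (4 * pi^3) * jbr ((real_of_int (0 + n))^2) powr (2 * (-1/2 + \<eta>)))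
      * Kint (- \<bar>2 * (-1/2 + \<eta>)\<bar>) (1/2)"
      by (rule X_prod_lower)
    thus ?thesis unfolding q_def[symmetric] k4(2) by simp
  qed
  have eqR: "ennreal (C'^2) * (ennreal (8 * pi^3) * ennreal \<kappa>1) *
     (ennreal (jbr (real_of_int n) powr (2 * s) * (8 * pi^3)) * ennreal \<kappa>2) =
     ennreal (C'^2 * (8 * pi^3 * \<kappa>1) * (jbr (real_of_int n) powr (2 * s) * (8 * pi^3) * \<kappa>2))"
    using k1 k2 by (simp add: ennreal_mult[symmetric] del: ennreal_mult')
  have eqL: "ennreal (jbr (real_of_int n) powr (2 * k) * (4 * pi^3) * jbr ((real_of_int n)^2) powr q) * ennreal \<kappa>4
     = ennreal (jbr (real_of_int n) powr (2 * k) * (4 * pi^3) * jbr ((real_of_int n)^2) powr q * \<kappa>4)"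
    using k4 by (simp add: ennreal_mult[symmetric] del: ennreal_mult')
  have "ennreal (jbr (real_of_int n) powr (2 * k) * (4 * pi^3) * jbr ((real_of_int n)^2) powr q * \<kappa>4) \<le>
     ennreal (C'^2 * (8 * pi^3 * \<kappa>1) * (jbr (real_of_int n) powr (2 * s) * (8 * pi^3) * \<kappa>2))"
    using order_trans[OF low up] unfolding eqL eqR .
  hence ineq: "jbr (real_of_int n) powr (2 * k) * (4 * pi^3) * jbr ((real_of_int n)^2) powr q * \<kappa>4 \<le>
     C'^2 * (8 * pi^3 * \<kappa>1) * (jbr (real_of_int n) powr (2 * s) * (8 * pi^3) * \<kappa>2)"
    using k1 k2 by (subst (asm) ennreal_le_iff) auto
  define y where "y = jbr (real_of_int n)"
  have y1: "y \<ge> 1" unfolding y_def by (rule jbr_ge1)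
  have yN: "y = 1 + real N" unfolding y_def n_def jbr_def by simp
  have Jq: "jbr ((real_of_int n)^2) powr q \<ge> 2 powr (- \<bar>q\<bar>) * y powr (2 * q)"
    unfolding y_def n_def by (rule jbr_sq_bound) simp
  have "y powr (2 * k) * y powr (2 * q) * c \<le> y powr (2 * k) * (4 * pi^3) * jbr ((real_of_int n)^2) powr q * \<kappa>4"
  proof -
    have "y powr (2 * k) * (4 * pi^3) * \<kappa>4 * (2 powr (- \<bar>q\<bar>) * y powr (2 * q)) \<le>
          y powr (2 * k) * (4 * pi^3) * \<kappa>4 * jbr ((real_of_int n)^2) powr q"
      using Jq k4 by (intro mult_left_mono) auto
    thus ?thesis by (simp add: c_def mult_ac)
  qed
  also have "\<dots> \<le> C'^2 * (8 * pi^3 * \<kappa>1) * (y powr (2 * s) * (8 * pi^3) * \<kappa>2)"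
    using ineq unfolding y_def .
  also have "\<dots> = D * y powr (2 * s)" by (simp add: D_def mult_ac)
  finally have "y powr (2 * k + 2 * q) * c \<le> D * y powr (2 * s)" by (simp add: powr_add)
  hence "y powr (2 * k + 2 * q) / y powr (2 * s) \<le> D / c" using c0 y1
    by (simp add: field_simps)
  hence "y powr (2 * k + 2 * q - 2 * s) \<le> D / c" by (simp add: powr_diff)
  moreover have "y powr (4 * \<eta>) \<le> y powr (2 * k + 2 * q - 2 * s)"
    using y1 ks by (intro powr_mono) (auto simp: q_def)
  ultimately have "y powr (4 * \<eta>) \<le> D / c" by linarith
  thus False using N yN by simp
qed


theorem proposition4p3:
  fixes k s b1 b2 \<eta> :: real
  assumes "\<eta> > 0"
    and "\<exists>C::real. \<forall>u v. test_fun u \<longrightarrow> test_fun v \<longrightarrow>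
           Xper_norm k (-1/2 + \<eta>) (\<lambda>p. u p * v p)
             \<le> ennreal C * Xper_norm k b1 u * HH_norm b2 s v"
  shows "s \<ge> 0 \<and> k < s + 1"
proof -
  obtain C :: real where H: "\<forall>u v. test_fun u \<longrightarrow> test_fun v \<longrightarrow>
           Xper_norm k (-1/2 + \<eta>) (\<lambda>p. u p * v p)
             \<le> ennreal C * Xper_norm k b1 u * HH_norm b2 s v"
    using assms(2) by blast
  show ?thesis using ex1[OF assms(1) H] ex2[OF H] by simp
qed

end
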